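(* Let $\mathcal{A}\subseteq\mathbb{R}^{m}$ be a nonempty set, let $C:\mathcal{A}\to\mathbb{R}$ be a base objective, and define $E:\mathcal{A}\to[0,\infty)$ by $E(a)=\|\hat{\theta}^k_{t+1}(a)-\theta^k\|^2$ where $\hat{\theta}^k_{t+1}(a)=h^{-k}_\ell(\hat{\theta}^k_t,\hat{\theta}^{-k}_t,a,s_t)$ for an arbitrary map $h^{-k}_\ell$ and fixed $\hat{\theta}^k_t,\hat{\theta}^{-k}_t,s_t,\theta^k$. For $\eta\ge0$ let $\Phi^{\eta}=C+\eta E$. Assume the relevant minima are attained (i.e., $\arg\min_{\mathcal{A}}C$, $\arg\min_{\mathcal{A}}E$ and $\arg\min_{\mathcal{A}}\Phi^\eta$ for the $\eta$ considered are nonempty, and $E$ attains its minimum on $\arg\min_{\mathcal{A}}C$). Let $a^{0}\in\arg\min_{\mathcal{A}}C$ be any minimizer, and for $\eta\ge0$ let $a^{\eta}\in\arg\min_{\mathcal{A}}\Phi^{\eta}$ be any minimizer. Then: (i) for every $\eta>0$, $E(a^{\eta})\le E(a^{0})$; (ii) if $\arg\min_{\mathcal{A}}C\cap\arg\min_{\mathcal{A}}E=\varnothing$, then there exists $\eta^\star>0$ such that for all $\eta>\eta^\star$, $E(a^{\eta})<E(a^{0})$. *)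

theory Defs
  imports "HOL-Analysis.Analysis"
begin

definition argmin_on :: "'a set \<Rightarrow> ('a \<Rightarrow> real) \<Rightarrow> 'a set" where
  "argmin_on A f = {a \<in> A. \<forall>b\<in>A. f a \<le> f b}"

definition E_obj :: "('p \<Rightarrow> 'q \<Rightarrow> 'a \<Rightarrow> 's \<Rightarrow> real ^ 'n) \<Rightarrow> 'p \<Rightarrow> 'q \<Rightarrow> 's \<Rightarrow> real ^ 'n
    \<Rightarrow> 'a \<Rightarrow> real" where
  "E_obj h thk thmk s theta a = (norm (h thk thmk a s - theta))\<^sup>2"

definition Phi :: "('a \<Rightarrow> real) \<Rightarrow> ('a \<Rightarrow> real) \<Rightarrow> real \<Rightarrow> 'a \<Rightarrow> real" where
  "Phi C E eta a = C a + eta * E a"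

end

theory Submission
  imports Defs
begin

theorem corollary3p3:
  fixes A :: "(real ^ 'm) set"
    and C :: "real ^ 'm \<Rightarrow> real"
    and h :: "real ^ 'n \<Rightarrow> 'q \<Rightarrow> real ^ 'm \<Rightarrow> 's \<Rightarrow> real ^ 'n"
    and thk :: "real ^ 'n" and thmk :: 'q and s :: 's and theta :: "real ^ 'n"
    and a0 :: "real ^ 'm"
  assumes "A \<noteq> {}"
    and "argmin_on A C \<noteq> {}"
    and "argmin_on A (E_obj h thk thmk s theta) \<noteq> {}"
    and "\<forall>eta\<ge>0. argmin_on A (Phi C (E_obj h thk thmk s theta) eta) \<noteq> {}"
    and "argmin_on (argmin_on A C) (E_obj h thk thmk s theta) \<noteq> {}"
    and "a0 \<in> argmin_on A C"
  shows "(\<forall>eta>0. \<forall>a \<in> argmin_on A (Phi C (E_obj h thk thmk s theta) eta).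
            E_obj h thk thmk s theta a \<le> E_obj h thk thmk s theta a0)
       \<and> (argmin_on A C \<inter> argmin_on A (E_obj h thk thmk s theta) = {} \<longrightarrow>
            (\<exists>eta_star>0. \<forall>eta>eta_star.
               \<forall>a \<in> argmin_on A (Phi C (E_obj h thk thmk s theta) eta).
                 E_obj h thk thmk s theta a < E_obj h thk thmk s theta a0))"
proof -
  define E where "E = E_obj h thk thmk s theta"
  have a0A: "a0 \<in> A" and a0m: "\<forall>b\<in>A. C a0 \<le> C b" using assms(6) by (auto simp: argmin_on_def)
  have P1: "\<forall>eta>0. \<forall>a \<in> argmin_on A (Phi C E eta). E a \<le> E a0"
  proof (intro allI impI ballI)
    fix eta :: real and a assume e: "eta > 0" and a: "a \<in> argmin_on A (Phi C E eta)"
    then have aA: "a \<in> A" and "C a + eta * E a \<le> C a0 + eta * E a0"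
      using a0A by (auto simp: argmin_on_def Phi_def)
    moreover have "C a0 \<le> C a" using a0m aA by auto
    ultimately have "eta * E a \<le> eta * E a0" by linarith
    then show "E a \<le> E a0" using e by simp
  qed
  have P2: "argmin_on A C \<inter> argmin_on A E = {} \<longrightarrow>
            (\<exists>eta_star>0. \<forall>eta>eta_star. \<forall>a \<in> argmin_on A (Phi C E eta). E a < E a0)"
  proof
    assume dis: "argmin_on A C \<inter> argmin_on A E = {}"
    obtain b where b: "b \<in> argmin_on A E" using assms(3) unfolding E_def by blast
    have bA: "b \<in> A" and bm: "\<forall>c\<in>A. E b \<le> E c" using b by (auto simp: argmin_on_def)
    have "a0 \<notin> argmin_on A E" using dis assms(6) by blast
    then have "E b < E a0"
      using a0A bm by (force simp: argmin_on_def)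
    define D where "D = C b - C a0"
    have D0: "D \<ge> 0" using a0m bA D_def by auto
    define es where "es = D / (E a0 - E b) + 1"
    have "D / (E a0 - E b) \<ge> 0" using D0 \<open>E b < E a0\<close> by simp
    then have es0: "es > 0" using es_def by linarith
    show "\<exists>eta_star>0. \<forall>eta>eta_star. \<forall>a \<in> argmin_on A (Phi C E eta). E a < E a0"
    proof (intro exI[of _ es] conjI allI impI ballI es0)
      fix eta :: real and a assume e: "eta > es" and a: "a \<in> argmin_on A (Phi C E eta)"
      then have aA: "a \<in> A" and "C a + eta * E a \<le> C b + eta * E b"
        using bA by (auto simp: argmin_on_def Phi_def)
      moreover have "C a0 \<le> C a" using a0m aA by auto
      ultimately have h1: "eta * (E a - E b) \<le> D" unfolding D_def by (simp add: algebra_simps)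
      have pos: "E a0 - E b > 0" using \<open>E b < E a0\<close> by simp
      have "D < eta * (E a0 - E b)"
      proof -
        have "D = (D / (E a0 - E b)) * (E a0 - E b)" using pos by simp
        also have "\<dots> < eta * (E a0 - E b)"
          using e es_def pos by (intro mult_strict_right_mono) auto
        finally show ?thesis .
      qed
      with h1 have "eta * (E a - E b) < eta * (E a0 - E b)" by linarith
      then have "E a - E b < E a0 - E b" using e es0
        by (meson mult_less_cancel_left_pos order.strict_trans)
      then show "E a < E a0" by simp
    qed
  qed
  show ?thesis using P1 P2 unfolding E_def by blast
qed

end
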